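(* Suppose that for every admissible set $\mathcal{H}$ with $|\mathcal{H}| = 3$, the difference set $\mathcal{D}(\mathcal{H})$ contains a weak Polignac number. Then \[ \liminf_{x \to \infty} \frac{\mathcal{P}(x)}{x} \;\geq\; \frac{1}{6}. \]
   Context: A positive integer $d$ is a weak Polignac number if there are infinitely many pairs of primes $(p,q)$ with $q - p = d$. For real $x$, $\mathcal{P}(x)$ denotes the number of weak Polignac numbers less than or equal to $x$. A finite set of integers $\mathcal{H} = \{h_1, \ldots, h_k\}$ is admissible if for every prime $p$ there is an integer $m$ with $h_i \not\equiv m \pmod p$ for all $1 \le i \le k$. Its difference set is $\mathcal{D}(\mathcal{H}) = \{h_j - h_i : h_i, h_j \in \mathcal{H},\ h_i < h_j\}$. *)

theory Defs
  imports "HOL-Analysis.Analysis"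
begin

definition weak_polignac :: "nat \<Rightarrow> bool" where
  "weak_polignac d \<longleftrightarrow> d > 0 \<and>
     infinite {(p, q). prime (p::nat) \<and> prime (q::nat) \<and> int q - int p = int d}"

definition polignac_count :: "real \<Rightarrow> nat" where
  "polignac_count x = card {d :: nat. weak_polignac d \<and> real d \<le> x}"

definition admissible :: "int set \<Rightarrow> bool" where
  "admissible H \<longleftrightarrow> finite H \<and>
     (\<forall>p :: nat. prime p \<longrightarrow> (\<exists>m :: int. \<forall>h\<in>H. h mod int p \<noteq> m mod int p))"

definition diff_set :: "int set \<Rightarrow> int set" where
  "diff_set H = {hj - hi | hi hj. hi \<in> H \<and> hj \<in> H \<and> hi < hj}"

end

theory Submission
  imports Defs
begin

lemma avoid_residue:
  fixes H :: "int set" and p :: nat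
  assumes "finite H" "card H < p"
  shows "\<exists>m::int. \<forall>h\<in>H. h mod int p \<noteq> m mod int p"
proof -
  let ?A = "(\<lambda>h. h mod int p) ` H"
  have "card ?A \<le> card H" using assms(1) by (rule card_image_le)
  also have "\<dots> < card {0..<int p}" using assms(2) by simp
  finally have "\<not> {0..<int p} \<subseteq> ?A"
    using assms(1) by (metis card_mono finite_imageI not_le)
  then obtain m where m: "m \<in> {0..<int p}" "m \<notin> ?A" by blast
  have "m mod int p = m" using m(1) by simp
  then show ?thesis using m(2) by (metis image_eqI)
qed

lemma triple:
  fixes r k :: nat
  assumes hyp: "\<forall>H :: int set. admissible H \<and> card H = 3 \<longrightarrow>
             (\<exists>d \<in> diff_set H. d > 0 \<and> weak_polignac (nat d))"
    and r: "even r" "r mod 3 \<noteq> 0" and k: "k \<ge> 1"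
  shows "weak_polignac r \<or> weak_polignac (6*k) \<or> weak_polignac (6*k+r)"
proof -
  define H where "H = {0::int, int r, int (6*k+r)}"
  have rpos: "r > 0" using r by (cases r) auto
  have card: "card H = 3" using rpos k unfolding H_def by auto
  have adm: "admissible H"
    unfolding admissible_def
  proof (intro conjI allI impI)
    show "finite H" unfolding H_def by simp
    fix p :: nat assume p: "prime p"
    show "\<exists>m::int. \<forall>h\<in>H. h mod int p \<noteq> m mod int p"
    proof (cases "p = 2")
      case True
      then show ?thesis using r unfolding H_def
        by (intro exI[of _ 1]) (auto simp: even_iff_mod_2_eq_zero[symmetric])
    next
      case False
      show ?thesis
      proof (cases "p = 3")
        case True
        have "r mod 3 = 1 \<or> r mod 3 = 2" using r by auto
        then show ?thesis using True unfolding H_def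
          by (intro exI[of _ "- int r"]) (auto; presburger)
      next
        case False2: False
        have "p \<ge> 2" using p prime_ge_2_nat by blast
        then have "p > 3" using False False2 by auto
        moreover have "card H \<le> 3" using card by simp
        ultimately show ?thesis using avoid_residue[of H p] unfolding H_def by auto
      qed
    qed
  qed
  obtain d where d: "d \<in> diff_set H" "d > 0" "weak_polignac (nat d)"
    using hyp adm card by blast
  have "d = int r \<or> d = int (6*k+r) \<or> d = int (6*k)"
    using d(1) unfolding diff_set_def H_def by auto
  then show ?thesis using d(3) by (metis nat_int)
qed

lemma key:
  assumes hyp: "\<forall>H :: int set. admissible H \<and> card H = 3 \<longrightarrow>
             (\<exists>d \<in> diff_set H. d > 0 \<and> weak_polignac (nat d))"
  shows "\<exists>r::nat. \<exists>f::nat\<Rightarrow>nat. inj_on f {1..} \<and> (\<forall>k\<ge>1. weak_polignac (f k) \<and> f k \<le> 6*k + r)"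
proof (cases "\<exists>r::nat. even r \<and> r mod 3 \<noteq> 0 \<and> \<not> weak_polignac r")
  case True
  then obtain r :: nat where r: "even r" "r mod 3 \<noteq> 0" "\<not> weak_polignac r" by blast
  define f where "f k = (if weak_polignac (6*k) then 6*k else 6*k+r)" for k
  have "inj_on f {1..}"
  proof (rule inj_onI)
    fix a b assume "f a = f b"
    then show "a = b" using r(2) unfolding f_def
      by (auto split: if_splits) presburger+
  qed
  moreover have "\<forall>k\<ge>1. weak_polignac (f k) \<and> f k \<le> 6*k + r"
    using triple[OF hyp r(1,2)] r(3) unfolding f_def by auto
  ultimately show ?thesis by blast
next
  case False
  have "\<forall>k\<ge>1. weak_polignac (6*k+2)"
  proof (intro allI impI)
    fix k :: nat
    have "even (6*k+2)" "(6*k+2) mod 3 \<noteq> 0" by presburger+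
    then show "weak_polignac (6*k+2)" using False by blast
  qed
  moreover have "inj_on (\<lambda>k::nat. 6*k+2) {1..}" by (auto intro: inj_onI)
  ultimately show ?thesis by (intro exI[of _ 2] exI[of _ "\<lambda>k. 6*k+2"]) auto
qed

theorem mainTheorem3:
  assumes "\<forall>H :: int set. admissible H \<and> card H = 3 \<longrightarrow>
             (\<exists>d \<in> diff_set H. d > 0 \<and> weak_polignac (nat d))"
  shows "Liminf at_top (\<lambda>x :: real. ereal (real (polignac_count x) / x)) \<ge> ereal (1/6)"
proof -
  obtain r :: nat and f where f: "inj_on f {1..}" "\<forall>k\<ge>1. weak_polignac (f k) \<and> f k \<le> 6*k + r"
    using key[OF assms] by blast
  have lower: "real (polignac_count x) \<ge> (x - r)/6 - 1" for x :: real
  proof -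
    define n where "n = nat \<lfloor>(x - r)/6\<rfloor>"
    have sub: "f ` {1..n} \<subseteq> {d. weak_polignac d \<and> real d \<le> x}"
    proof
      fix d assume "d \<in> f ` {1..n}"
      then obtain k where k: "k \<in> {1..n}" "d = f k" by blast
      have "f k \<le> 6 * k + r" using f(2) k(1) by simp
      then have "real (f k) \<le> 6 * real k + r" by linarith
      also have "real k \<le> real n" using k(1) by simp
      then have "6 * real k + r \<le> 6 * real n + r" by simp
      also have "real n \<le> (x - r)/6"
      proof -
        have "n \<ge> 1" using k(1) by simp
        then have "\<lfloor>(x - r)/6\<rfloor> \<ge> 1" unfolding n_def by linarith
        then have "real n = \<lfloor>(x - r)/6\<rfloor>" unfolding n_def by simp
        then show ?thesis by linarith
      qed
      then have "6 * real n + r \<le> x" by simp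
      finally show "d \<in> {d. weak_polignac d \<and> real d \<le> x}" using k f(2) by auto
    qed
    have fin: "finite {d. weak_polignac d \<and> real d \<le> x}"
      by (rule finite_subset[of _ "{..nat \<lceil>x\<rceil>}"]) (auto, linarith)
    have "inj_on f {1..n}" using f(1) by (rule inj_on_subset) auto
    then have "card (f ` {1..n}) = n" by (simp add: card_image)
    then have "n \<le> polignac_count x" unfolding polignac_count_def
      using card_mono[OF fin sub] by simp
    moreover have "real n \<ge> (x - r)/6 - 1" unfolding n_def by linarith
    ultimately show ?thesis by linarith
  qed
  show ?thesis
  proof (subst le_Liminf_iff, intro allI impI)
    fix y :: ereal assume y: "y < ereal (1/6)"
    show "\<forall>\<^sub>F x in at_top. y < ereal (real (polignac_count x) / x)"
    proof (cases y)
      case (real c)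
      then have c: "c < 1/6" using y by simp
      define X where "X = max 1 ((r + 6) / (6 * (1/6 - c)) + 1)"
      have "eventually (\<lambda>x. x \<ge> X) at_top" by (rule eventually_ge_at_top)
      then show ?thesis
      proof (rule eventually_mono)
        fix x assume x: "x \<ge> X"
        have xpos: "x > 0" using x unfolding X_def by linarith
        have "x > (r + 6) / (6 * (1/6 - c))" using x unfolding X_def by linarith
        then have "x * (6 * (1/6 - c)) > r + 6" using c by (simp add: divide_less_eq)
        then have "c * x < (x - r)/6 - 1" by (simp add: algebra_simps)
        also have "\<dots> \<le> real (polignac_count x)" by (rule lower)
        finally have "c < real (polignac_count x) / x" using xpos by (simp add: less_divide_eq)
        then show "y < ereal (real (polignac_count x) / x)" using real by simp
      qed
    next
      case PInf then show ?thesis using y by simp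
    next
      case MInf then show ?thesis by simp
    qed
  qed
qed

end
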